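(* For any $\mathbf{x}_i\in\chi$ and any $\mathbf{x}\in\mathcal{D}_{i,\mathrm{DP}}$: (i) $\mathcal{D}_{i,\mathrm{DP}}\subseteq\mathcal{D}_{i,\mathrm{ML}}$; (ii) $\|\mathbf{x}-\mathbf{y}\|\ge\|\mathbf{x}_i-\mathbf{x}_j\|$ for every $\mathbf{x}_j\in\chi$ and every $\mathbf{y}\in\mathcal{D}_{j,\mathrm{DP}}$; (iii) $\|\mathbf{x}-\mathbf{x}_j\|\ge\|\mathbf{x}_i-\mathbf{x}_j\|$ for every $\mathbf{x}_j\in\chi$, with equality (for $\mathbf{x}_j\neq\mathbf{x}_i$) only when $\mathbf{x}=\mathbf{x}_i$.
   Context: A constellation is a finite set $\chi=\{\mathbf{x}_1,\dots,\mathbf{x}_M\}\subset\mathbb{R}^2$ of distinct points, $M\ge 3$, not all lying on one line. The Voronoi region of $\mathbf{x}_i$ is $\mathcal{D}_{i,\mathrm{ML}}=\{\mathbf{x}\in\mathbb{R}^2:\|\mathbf{x}-\mathbf{x}_i\|\le\|\mathbf{x}-\mathbf{x}_j\|\ \forall j\}$. Two distinct points $\mathbf{x}_i,\mathbf{x}_j$ are neighbors if their Voronoi regions share an edge (a common boundary segment or ray of positive length); $\mathcal{S}_i$ denotes the set of neighbors of $\mathbf{x}_i$. The distance preserving constructive interference region (DPCIR) of $\mathbf{x}_i$ is $\mathcal{D}_{i,\mathrm{DP}}=\{\mathbf{x}\in\mathbb{R}^2:(\mathbf{x}_i-\mathbf{x}_j)^T\mathbf{x}\ge(\mathbf{x}_i-\mathbf{x}_j)^T(\mathbf{x}_i+\mathbf{x}_j)/2+\|\mathbf{x}_i-\mathbf{x}_j\|^2/2\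 \forall\mathbf{x}_j\in\mathcal{S}_i\}$, equivalently $\{\mathbf{x}:(\mathbf{x}_i-\mathbf{x}_j)^T(\mathbf{x}-\mathbf{x}_i)\ge 0\ \forall\mathbf{x}_j\in\mathcal{S}_i\}$. *)

theory Defs
  imports "HOL-Analysis.Analysis"
begin

definition constellation :: "(real^2) set \<Rightarrow> bool" where
  "constellation C \<longleftrightarrow> finite C \<and> card C \<ge> 3 \<and> \<not> collinear C"

text \<open>Voronoi (ML decision) region of \<open>xi\<close>.\<close>
definition voronoi :: "(real^2) set \<Rightarrow> real^2 \<Rightarrow> (real^2) set" where
  "voronoi C xi = {x. \<forall>xj\<in>C. norm (x - xi) \<le> norm (x - xj)}"

text \<open>Neighbors: distinct points whose Voronoi regions share a boundary segment
  (or ray) of positive length, i.e. the common part contains a non-degenerate segment.\<close>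
definition neighbors :: "(real^2) set \<Rightarrow> real^2 \<Rightarrow> (real^2) set" where
  "neighbors C xi = {xj \<in> C. xj \<noteq> xi \<and>
      (\<exists>a b. a \<noteq> b \<and> closed_segment a b \<subseteq> voronoi C xi \<inter> voronoi C xj)}"

text \<open>Distance preserving constructive interference region.\<close>
definition dpcir :: "(real^2) set \<Rightarrow> real^2 \<Rightarrow> (real^2) set" where
  "dpcir C xi = {x. \<forall>xj\<in>neighbors C xi.
      (xi - xj) \<bullet> x \<ge> (xi - xj) \<bullet> (xi + xj) / 2 + (norm (xi - xj))\<^sup>2 / 2}"

end

theory Submission
  imports Defs
begin


lemma hs_iff:
  fixes x xi xj :: "real^2"
  shows "norm (x - xi) \<le> norm (x - xj) \<longleftrightarrow> (xj - xi) \<bullet> x \<le> (norm xj ^ 2 - norm xi ^ 2) / 2"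
  unfolding norm_le by (simp add: power2_norm_eq_inner algebra_simps inner_commute)

lemma hs_eq:
  fixes x xi xj :: "real^2"
  shows "norm (x - xi) = norm (x - xj) \<longleftrightarrow> (xj - xi) \<bullet> x = (norm xj ^ 2 - norm xi ^ 2) / 2"
  unfolding norm_eq by (simp add: power2_norm_eq_inner algebra_simps inner_commute)

lemma dp_iff:
  fixes x xi xj :: "real^2"
  shows "(xi - xj) \<bullet> x \<ge> (xi - xj) \<bullet> (xi + xj) / 2 + (norm (xi - xj))\<^sup>2 / 2
     \<longleftrightarrow> (xi - xj) \<bullet> (x - xi) \<ge> 0"
  by (simp add: power2_norm_eq_inner algebra_simps inner_commute field_simps) arith

lemma prop2:
  fixes a n d :: "real^2"
  assumes "a \<bullet> d = 0" "n \<bullet> d = 0" "d \<noteq> 0" "n \<noteq> 0"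
  shows "a = ((a \<bullet> n) / (n \<bullet> n)) *\<^sub>R n"
proof -
  have c: "a$1 * n$2 = a$2 * n$1"
  proof -
    have e1: "a$1*d$1 + a$2*d$2 = 0" "n$1*d$1 + n$2*d$2 = 0"
      using assms(1,2) by (simp_all add: inner_vec_def sum_2)
    have "d$1 \<noteq> 0 \<or> d$2 \<noteq> 0" using assms(3) by (metis exhaust_2 vec_eq_iff zero_index)
    then show ?thesis
    proof
      assume h: "d$1 \<noteq> 0"
      have "(a$1 * n$2 - a$2 * n$1) * d$1 = 0"
        using e1 by algebra
      then show ?thesis using h by simp
    next
      assume h: "d$2 \<noteq> 0"
      have "(a$1 * n$2 - a$2 * n$1) * d$2 = 0"
        using e1 by algebra
      then show ?thesis using h by simp
    qed
  qed
  have nn: "n \<bullet> n = n$1*n$1 + n$2*n$2" by (simp add: inner_vec_def sum_2)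
  have an: "a \<bullet> n = a$1*n$1 + a$2*n$2" by (simp add: inner_vec_def sum_2)
  have pos: "n \<bullet> n \<noteq> 0" using assms(4) by simp
  show ?thesis
  proof (subst vec_eq_iff, intro allI)
    fix i :: 2
    have "i = 1 \<or> i = 2" using exhaust_2 by blast
    moreover have "a$1 * (n \<bullet> n) = (a \<bullet> n) * n$1" "a$2 * (n \<bullet> n) = (a \<bullet> n) * n$2"
      unfolding nn an using c by algebra+
    ultimately show "a $ i = (((a \<bullet> n) / (n \<bullet> n)) *\<^sub>R n) $ i"
      using pos by (auto simp: field_simps)
  qed
qed
lemma hs_lt:
  fixes x xi xj :: "real^2"
  shows "norm (x - xi) < norm (x - xj) \<longleftrightarrow> (xj - xi) \<bullet> x < (norm xj ^ 2 - norm xi ^ 2) / 2"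
  unfolding norm_lt by (simp add: power2_norm_eq_inner algebra_simps inner_commute)

lemma voronoi_alt:
  "voronoi C xi = \<Inter>((\<lambda>xj. {x. (xj - xi) \<bullet> x \<le> (norm xj ^ 2 - norm xi ^ 2) / 2}) ` C)"
  unfolding voronoi_def using hs_iff by auto

lemma strict_interior:
  fixes C :: "(real^2) set"
  assumes "finite C"
    and "\<forall>xj\<in>C-{xi}. norm (x - xi) < norm (x - xj)"
  shows "x \<in> interior (voronoi C xi)"
proof -
  let ?U = "\<Inter>((\<lambda>xj. {y. norm (y - xi) < norm (y - xj)}) ` (C - {xi}))"
  have "open ?U"
    using assms(1) by (intro open_INT) (auto intro!: open_Collect_less continuous_intros)
  moreover have "x \<in> ?U" using assms(2) by auto
  moreover have "?U \<subseteq> voronoi C xi"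
    unfolding voronoi_def by (auto intro: less_imp_le)
  ultimately show ?thesis by (meson interior_maximal subsetD)
qed

lemma voronoi_neighbors:
  fixes C :: "(real^2) set" and xi z :: "real^2"
  assumes fin: "finite C" and xiC: "xi \<in> C"
    and zn: "\<forall>xj\<in>neighbors C xi. (xj - xi) \<bullet> z \<le> (norm xj ^ 2 - norm xi ^ 2) / 2"
  shows "z \<in> voronoi C xi"
proof -
  define V where "V = voronoi C xi"
  have poly: "polyhedron V"
    unfolding V_def voronoi_alt using fin by (intro polyhedron_Inter) (auto simp only: intro: polyhedron_halfspace_le)
  have xiint: "xi \<in> interior V"
    unfolding V_def by (rule strict_interior[OF fin]) auto
  then have ahV: "affine hull V = UNIV" using affine_hull_nonempty_interior by blast
  have adV: "aff_dim V = 2" using aff_dim_nonempty_interior[of V] xiint by auto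
  obtain F where "finite F" and seq: "V = affine hull V \<inter> \<Inter>F"
      and faces: "\<And>h. h \<in> F \<Longrightarrow> \<exists>a b. a \<noteq> 0 \<and> h = {x. a \<bullet> x \<le> b}"
      and min: "\<And>F'. F' \<subset> F \<Longrightarrow> V \<subset> (affine hull V) \<inter> \<Inter>F'"
    using poly by (simp add: polyhedron_Int_affine_minimal) meson
  then obtain a b where ab: "\<And>h. h \<in> F \<Longrightarrow> a h \<noteq> 0 \<and> h = {x. a h \<bullet> x \<le> b h}"
    by metis
  have "z \<in> h" if hF: "h \<in> F" for h
  proof -
    define K where "K = V \<inter> {x. a h \<bullet> x = b h}"
    have "K facet_of V"
      using facet_of_polyhedron_explicit[OF \<open>finite F\<close> seq ab min, of K] K_def hF by blast
    then have Kface: "K face_of V" and Kne: "K \<noteq> {}" and adK: "aff_dim K = 1"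
      unfolding facet_of_def using adV by auto
    have convK: "convex K" using Kface face_of_imp_convex by blast
    have Vh: "V \<subseteq> h" using seq hF by blast
    have intV: "interior V \<subseteq> {x. a h \<bullet> x < b h}"
    proof -
      have "interior h = {x. a h \<bullet> x < b h}" using ab[OF hF] interior_halfspace_le by metis
      then show ?thesis using interior_mono[OF Vh] by blast
    qed
    obtain p q where pq: "p \<in> K" "q \<in> K" "p \<noteq> q"
    proof -
      obtain p where "p \<in> K" using Kne by blast
      show ?thesis
      proof (cases "K = {p}")
        case True then show ?thesis using adK by simp
      next
        case False then obtain q where "q \<in> K" "q \<noteq> p" using \<open>p \<in> K\<close> by blast
        then show ?thesis using that \<open>p \<in> K\<close> by metis
      qed
    qed
    define S where "S = closed_segment p q"
    have SK: "S \<subseteq> K" unfolding S_def using pq convK closed_segment_subset by blast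
    have Sinf: "infinite S" unfolding S_def using pq by simp
    have cover: "S \<subseteq> (\<Union>xj\<in>C-{xi}. {x. norm (x - xi) = norm (x - xj)})"
    proof
      fix x assume "x \<in> S"
      then have xK: "x \<in> K" using SK by blast
      then have xV: "x \<in> V" and xa: "a h \<bullet> x = b h" unfolding K_def by auto
      show "x \<in> (\<Union>xj\<in>C-{xi}. {x. norm (x - xi) = norm (x - xj)})"
      proof (rule ccontr)
        assume "\<not> ?thesis"
        then have "\<forall>xj\<in>C-{xi}. norm (x - xi) < norm (x - xj)"
          using xV unfolding V_def voronoi_def by (auto simp: order_le_less)
        then have "x \<in> interior V" unfolding V_def by (rule strict_interior[OF fin])
        then show False using intV xa by auto
      qed
    qed
    have "infinite (\<Union>xj\<in>C-{xi}. S \<inter> {x. norm (x - xi) = norm (x - xj)})"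
    proof -
      have "S = (\<Union>xj\<in>C-{xi}. S \<inter> {x. norm (x - xi) = norm (x - xj)})" using cover by blast
      then show ?thesis using Sinf by simp
    qed
    then obtain xj where xjC: "xj \<in> C - {xi}" and inf2: "infinite (S \<inter> {x. norm (x - xi) = norm (x - xj)})"
      using fin by blast
    define L where "L = {x. (xj - xi) \<bullet> x = (norm xj ^ 2 - norm xi ^ 2) / 2}"
    have SL: "S \<inter> {x. norm (x - xi) = norm (x - xj)} = S \<inter> L" unfolding L_def using hs_eq by auto
    obtain p' q' where p'q': "p' \<in> S \<inter> L" "q' \<in> S \<inter> L" "p' \<noteq> q'"
    proof -
      obtain p' where "p' \<in> S \<inter> L" using inf2 SL by (metis finite.emptyI ex_in_conv)
      moreover obtain q' where "q' \<in> S \<inter> L - {p'}" using inf2 SL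
        by (metis finite_insert finite.emptyI ex_in_conv Diff_empty infinite_remove)
      ultimately show ?thesis using that by blast
    qed
    have convSL: "convex (S \<inter> L)" unfolding S_def L_def
      by (intro convex_Int convex_closed_segment convex_hyperplane)
    have segsub: "closed_segment p' q' \<subseteq> S \<inter> L" using closed_segment_subset[OF _ _ convSL] p'q' by blast
    have "closed_segment p' q' \<subseteq> voronoi C xi \<inter> voronoi C xj"
    proof
      fix y assume "y \<in> closed_segment p' q'"
      then have yS: "y \<in> S" and yL: "y \<in> L" using segsub by auto
      have yV: "y \<in> voronoi C xi" using yS SK unfolding K_def V_def by auto
      have eq: "norm (y - xi) = norm (y - xj)" using yL hs_eq unfolding L_def by auto
      have "y \<in> voronoi C xj" using yV eq unfolding voronoi_def by auto
      then show "y \<in> voronoi C xi \<inter> voronoi C xj" using yV by blast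
    qed
    then have "xj \<in> neighbors C xi" unfolding neighbors_def using xjC p'q'(3) by blast
    then have nz: "(xj - xi) \<bullet> z \<le> (norm xj ^ 2 - norm xi ^ 2) / 2" using zn by blast
    define n where "n = xj - xi"
    define c where "c = (norm xj ^ 2 - norm xi ^ 2) / 2"
    have nne: "n \<noteq> 0" using xjC unfolding n_def by auto
    have K': "p' \<in> K" "q' \<in> K" using p'q' SK by auto
    have ap: "a h \<bullet> p' = b h" "a h \<bullet> q' = b h" using K' unfolding K_def by auto
    have np: "n \<bullet> p' = c" "n \<bullet> q' = c" using p'q' unfolding L_def n_def c_def by auto
    have "a h \<bullet> (q' - p') = 0" using ap by (simp add: inner_diff_right)
    moreover have "n \<bullet> (q' - p') = 0" using np by (simp add: inner_diff_right)
    moreover have "q' - p' \<noteq> 0" using p'q' by auto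
    ultimately have aeq: "a h = ((a h \<bullet> n) / (n \<bullet> n)) *\<^sub>R n" using prop2 nne by blast
    define lam where "lam = (a h \<bullet> n) / (n \<bullet> n)"
    have aeq': "a h = lam *\<^sub>R n" using aeq lam_def by simp
    have bl: "b h = lam * c" using ap(1) np(1) aeq' by simp
    have axi: "a h \<bullet> xi < b h" using xiint intV by auto
    have nxi: "n \<bullet> xi < c" using hs_lt[of xi xi xj] xjC unfolding n_def c_def by auto
    have "lam > 0"
    proof (rule ccontr)
      assume "\<not> lam > 0"
      then have "lam * c \<le> lam * (n \<bullet> xi)" using nxi by (simp add: mult_left_mono_neg)
      then show False using axi aeq' bl by simp
    qed
    then have "lam * (n \<bullet> z) \<le> lam * c" using nz unfolding n_def c_def by simp
    then have "a h \<bullet> z \<le> b h" using aeq' bl by simp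
    then show "z \<in> h" using ab[OF hF] by blast
  qed
  then have "z \<in> affine hull V \<inter> \<Inter>F" using ahV by blast
  then show ?thesis using seq V_def by blast
qed

lemma nsq:
  fixes u v :: "real^2"
  shows "norm (u + v) ^ 2 = norm u ^ 2 + 2 * (u \<bullet> v) + norm v ^ 2"
  using dot_norm[of u v] by simp

lemma cone_all:
  fixes C :: "(real^2) set" and xi d :: "real^2"
  assumes fin: "finite C" and xiC: "xi \<in> C"
    and dn: "\<forall>xj\<in>neighbors C xi. (xi - xj) \<bullet> d \<ge> 0"
    and xjC: "xj \<in> C"
  shows "(xi - xj) \<bullet> d \<ge> 0"
proof (rule ccontr)
  assume neg: "\<not> ?thesis"
  define k where "k = (xi - xj) \<bullet> d"
  have kn: "k < 0" using neg k_def by simp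
  have inV: "xi + t *\<^sub>R d \<in> voronoi C xi" if "t \<ge> 0" for t
  proof (rule voronoi_neighbors[OF fin xiC], intro ballI)
    fix xk assume "xk \<in> neighbors C xi"
    then have "(xi - xk) \<bullet> d \<ge> 0" using dn by blast
    moreover have "(xk - xi) \<bullet> (t *\<^sub>R d) = - (t * ((xi - xk) \<bullet> d))"
      by (metis inner_minus_left inner_scaleR_right minus_diff_eq)
    ultimately have "(xk - xi) \<bullet> (t *\<^sub>R d) \<le> 0" using that by (simp add: mult_nonneg_nonneg)
    moreover have "(xk - xi) \<bullet> xi \<le> (norm xk ^ 2 - norm xi ^ 2) / 2"
      using hs_iff[of xi xi xk] by simp
    ultimately show "(xk - xi) \<bullet> (xi + t *\<^sub>R d) \<le> (norm xk ^ 2 - norm xi ^ 2) / 2"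
      by (simp add: inner_add_right)
  qed
  define t where "t = (norm (xi - xj) ^ 2 + 1) / (- 2 * k)"
  have t0: "t \<ge> 0" using kn unfolding t_def by (intro divide_nonneg_nonneg) auto
  have "norm (xi + t *\<^sub>R d - xi) \<le> norm (xi + t *\<^sub>R d - xj)"
    using inV[OF t0] xjC unfolding voronoi_def by blast
  moreover have "xi + t *\<^sub>R d - xi = t *\<^sub>R d" by simp
  moreover have "xi + t *\<^sub>R d - xj = t *\<^sub>R d + (xi - xj)" by (simp add: algebra_simps)
  ultimately have "norm (t *\<^sub>R d) \<le> norm (t *\<^sub>R d + (xi - xj))" by simp
  then have "norm (t *\<^sub>R d) ^ 2 \<le> norm (t *\<^sub>R d + (xi - xj)) ^ 2"
    by (rule power_mono) simp
  moreover have "(t *\<^sub>R d) \<bullet> (xi - xj) = t * k" unfolding k_def by (simp add: inner_commute)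
  ultimately have "0 \<le> 2 * t * k + norm (xi - xj) ^ 2"
    using nsq[of "t *\<^sub>R d" "xi - xj"] by linarith
  moreover have "2 * t * k = - (norm (xi - xj) ^ 2 + 1)"
    using kn unfolding t_def by (simp add: field_simps)
  ultimately show False by simp
qed

theorem mainTheorem5:
  fixes C :: "(real^2) set" and xi x :: "real^2"
  assumes "constellation C" and "xi \<in> C" and "x \<in> dpcir C xi"
  shows "dpcir C xi \<subseteq> voronoi C xi
    \<and> (\<forall>xj\<in>C. \<forall>y\<in>dpcir C xj. norm (x - y) \<ge> norm (xi - xj))
    \<and> (\<forall>xj\<in>C. norm (x - xj) \<ge> norm (xi - xj)
          \<and> (xj \<noteq> xi \<and> norm (x - xj) = norm (xi - xj) \<longrightarrow> x = xi))"
proof -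
  have fin: "finite C" using assms(1) unfolding constellation_def by blast
  have dp: "\<forall>xk\<in>C. (xj - xk) \<bullet> (y - xj) \<ge> 0" if "xj \<in> C" "y \<in> dpcir C xj" for xj y
  proof
    fix xk assume "xk \<in> C"
    have "\<forall>xl\<in>neighbors C xj. (xj - xl) \<bullet> (y - xj) \<ge> 0"
      using that(2) dp_iff unfolding dpcir_def by blast
    then show "(xj - xk) \<bullet> (y - xj) \<ge> 0" using cone_all[OF fin that(1)] \<open>xk \<in> C\<close> by blast
  qed
  have sq: "norm (y - xj) ^ 2 = norm (y - xi) ^ 2 + 2 * ((xi - xj) \<bullet> (y - xi)) + norm (xi - xj) ^ 2"
    for y xj :: "real^2"
  proof -
    have e: "(y - xi) + (xi - xj) = y - xj" by simp
    have "(y - xi) \<bullet> (xi - xj) = ((norm (y - xj))\<^sup>2 - (norm (y - xi))\<^sup>2 - (norm (xi - xj))\<^sup>2) / 2"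
      using dot_norm[of "y - xi" "xi - xj"] unfolding e .
    then show ?thesis by (simp add: inner_commute)
  qed
  have P1: "dpcir C xi \<subseteq> voronoi C xi"
  proof
    fix y assume y: "y \<in> dpcir C xi"
    have "norm (y - xi) \<le> norm (y - xj)" if "xj \<in> C" for xj
    proof -
      have "(xi - xj) \<bullet> (y - xi) \<ge> 0" using dp[OF assms(2) y] that by blast
      then have "norm (y - xi) ^ 2 \<le> norm (y - xj) ^ 2" using sq[of y xj] by simp
      then show ?thesis by (simp add: power_mono_iff)
    qed
    then show "y \<in> voronoi C xi" unfolding voronoi_def by blast
  qed
  have P2: "\<forall>xj\<in>C. \<forall>y\<in>dpcir C xj. norm (x - y) \<ge> norm (xi - xj)"
  proof (intro ballI)
    fix xj y assume xj: "xj \<in> C" and y: "y \<in> dpcir C xj"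
    define n where "n = xi - xj"
    have a1: "n \<bullet> (x - xi) \<ge> 0" using dp[OF assms(2,3)] xj n_def by blast
    have a2: "(xj - xi) \<bullet> (y - xj) \<ge> 0" using dp[OF xj y] assms(2) by blast
    have "x - y = (x - xi) + n + (xj - y)" unfolding n_def by simp
    moreover have "n \<bullet> (xj - y) = (xj - xi) \<bullet> (y - xj)"
      unfolding n_def by (metis inner_minus_left inner_minus_right minus_diff_eq)
    ultimately have "n \<bullet> (x - y) = n \<bullet> (x - xi) + n \<bullet> n + (xj - xi) \<bullet> (y - xj)"
      by (simp only: inner_add_right)
    then have ge: "n \<bullet> (x - y) \<ge> norm n ^ 2" using a1 a2 by (simp add: power2_norm_eq_inner)
    have "n \<bullet> (x - y) \<le> norm n * norm (x - y)" by (rule norm_cauchy_schwarz)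
    then have "norm n * norm n \<le> norm n * norm (x - y)" using ge by (simp add: power2_eq_square)
    then show "norm (x - y) \<ge> norm (xi - xj)"
      unfolding n_def by (cases "norm (xi - xj) = 0") (auto simp: mult_le_cancel_left)
  qed
  have P3: "\<forall>xj\<in>C. norm (x - xj) \<ge> norm (xi - xj)
          \<and> (xj \<noteq> xi \<and> norm (x - xj) = norm (xi - xj) \<longrightarrow> x = xi)"
  proof (intro ballI conjI impI)
    fix xj assume xj: "xj \<in> C"
    have a1: "(xi - xj) \<bullet> (x - xi) \<ge> 0" using dp[OF assms(2,3)] xj by blast
    have e: "norm (x - xj) ^ 2 = norm (x - xi) ^ 2 + 2 * ((xi - xj) \<bullet> (x - xi)) + norm (xi - xj) ^ 2"
      by (rule sq)
    then have "norm (xi - xj) ^ 2 \<le> norm (x - xj) ^ 2" using a1 by simp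
    then show "norm (x - xj) \<ge> norm (xi - xj)" by (simp add: power_mono_iff)
    assume "xj \<noteq> xi \<and> norm (x - xj) = norm (xi - xj)"
    then have h: "norm (x - xj) ^ 2 = norm (xi - xj) ^ 2" by simp
    have "norm (x - xi) ^ 2 \<le> 0" using e a1 h by linarith
    then show "x = xi" by simp
  qed
  show ?thesis using P1 P2 P3 by blast
qed

end
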